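(* $\mathrm{SO}\text{-}\mathrm{EKROM}$ is closed under substructures: for every $\mathrm{SO}\text{-}\mathrm{EKROM}(\tau)$ sentence $\Phi$ and all finite $\tau$-structures $\mathcal{A},\mathcal{B}$ with $\mathcal{B}$ a substructure of $\mathcal{A}$, if $\mathcal{A}\models\Phi$ then $\mathcal{B}\models\Phi$.
   Context: For a vocabulary $\tau$ (containing equality), an SO-EKROM$(\tau)$ (second-order extended Krom) formula is a second-order formula of the form $\forall X_1\exists Y_1\cdots\forall X_k\exists Y_k\forall\bar{x}(C_1\wedge\cdots\wedge C_n)$, where $X_i,Y_i$ are relation variables and each clause $C_i$ is a disjunction $\alpha_1\vee\cdots\vee\alpha_l\vee H_1\vee H_2$ in which each $\alpha_s$ is $Q\bar{y}$ or $\neg Q\bar{y}$ with $Q\in\tau\cup\{X_1,\dots,X_k\}$, and each $H_t$ is $Y_i\bar{z}$ or $\neg Y_i\bar{z}$ for some $1\le i\le k$. *)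

theory Defs
  imports Main
begin

text \<open>A (relational) vocabulary tau is given by a type 'r of relation symbols
  together with an arity function ar. Equality is always available (it is a
  built-in literal in the syntax below).\<close>

type_synonym ('a, 'r) struct = "'a set \<times> ('r \<Rightarrow> 'a list set)"

definition is_structure :: "('r \<Rightarrow> nat) \<Rightarrow> ('a, 'r) struct \<Rightarrow> bool" where
  "is_structure ar S \<longleftrightarrow> fst S \<noteq> {} \<and>
     (\<forall>R. \<forall>t \<in> snd S R. length t = ar R \<and> set t \<subseteq> fst S)"

definition finite_structure :: "('r \<Rightarrow> nat) \<Rightarrow> ('a, 'r) struct \<Rightarrow> bool" where
  "finite_structure ar S \<longleftrightarrow> is_structure ar S \<and> finite (fst S)"

definition substructure :: "('r \<Rightarrow> nat) \<Rightarrow> ('a, 'r) struct \<Rightarrow> ('a, 'r) struct \<Rightarrow> bool" where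
  "substructure ar B A \<longleftrightarrow> is_structure ar A \<and> is_structure ar B \<and>
     fst B \<subseteq> fst A \<and> (\<forall>R. snd B R = {t \<in> snd A R. set t \<subseteq> fst B})"

text \<open>First-order variables are natural numbers. Second-order variables X_i, Y_i
  are referred to by their index i (0-based).\<close>

text \<open>Literals alpha over tau, equality and the universally quantified X_i
  (the Boolean is the polarity: True = positive, False = negated).\<close>
datatype 'r alit =
    LRel bool 'r "nat list"
  | LEq bool nat nat
  | LX bool nat "nat list"

datatype hlit = LY bool nat "nat list"

text \<open>A clause: alpha_1 \/ ... \/ alpha_l \/ H_1 \/ H_2 with at most two H-literals.\<close>
type_synonym 'r clause = "'r alit list \<times> hlit list"

text \<open>An SO-EKROM formula: the prefix lists the arities (arity X_i, arity Y_i) of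
  the blocks forall X_i exists Y_i (i = 1..k), and the matrix is a list of clauses.
  All first-order variables are universally quantified (forall x-bar).\<close>
type_synonym 'r so_ekrom = "(nat \<times> nat) list \<times> 'r clause list"

fun wf_alit :: "('r \<Rightarrow> nat) \<Rightarrow> (nat \<times> nat) list \<Rightarrow> 'r alit \<Rightarrow> bool" where
  "wf_alit ar ps (LRel b R ys) = (length ys = ar R)"
| "wf_alit ar ps (LEq b y z) = True"
| "wf_alit ar ps (LX b i ys) = (i < length ps \<and> length ys = fst (ps ! i))"

fun wf_hlit :: "(nat \<times> nat) list \<Rightarrow> hlit \<Rightarrow> bool" where
  "wf_hlit ps (LY b i ys) = (i < length ps \<and> length ys = snd (ps ! i))"

definition wf_clause :: "('r \<Rightarrow> nat) \<Rightarrow> (nat \<times> nat) list \<Rightarrow> 'r clause \<Rightarrow> bool" where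
  "wf_clause ar ps C \<longleftrightarrow> (\<forall>a \<in> set (fst C). wf_alit ar ps a) \<and>
     length (snd C) \<le> 2 \<and> (\<forall>h \<in> set (snd C). wf_hlit ps h)"

definition so_ekrom_sentence :: "('r \<Rightarrow> nat) \<Rightarrow> 'r so_ekrom \<Rightarrow> bool" where
  "so_ekrom_sentence ar \<Phi> \<longleftrightarrow> (\<forall>C \<in> set (snd \<Phi>). wf_clause ar (fst \<Phi>) C)"

fun sem_alit :: "('a, 'r) struct \<Rightarrow> 'a list set list \<Rightarrow> (nat \<Rightarrow> 'a) \<Rightarrow> 'r alit \<Rightarrow> bool" where
  "sem_alit S Xs v (LRel b R ys) = ((map v ys \<in> snd S R) = b)"
| "sem_alit S Xs v (LEq b y z) = ((v y = v z) = b)"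
| "sem_alit S Xs v (LX b i ys) = ((map v ys \<in> Xs ! i) = b)"

fun sem_hlit :: "'a list set list \<Rightarrow> (nat \<Rightarrow> 'a) \<Rightarrow> hlit \<Rightarrow> bool" where
  "sem_hlit Ys v (LY b i ys) = ((map v ys \<in> Ys ! i) = b)"

definition sem_clause ::
  "('a, 'r) struct \<Rightarrow> 'a list set list \<Rightarrow> 'a list set list \<Rightarrow> (nat \<Rightarrow> 'a) \<Rightarrow> 'r clause \<Rightarrow> bool" where
  "sem_clause S Xs Ys v C \<longleftrightarrow> (\<exists>a \<in> set (fst C). sem_alit S Xs v a) \<or> (\<exists>h \<in> set (snd C). sem_hlit Ys v h)"

definition sem_matrix ::
  "('a, 'r) struct \<Rightarrow> 'r clause list \<Rightarrow> 'a list set list \<Rightarrow> 'a list set list \<Rightarrow> bool" where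
  "sem_matrix S Cs Xs Ys \<longleftrightarrow>
     (\<forall>v. (\<forall>x. v x \<in> fst S) \<longrightarrow> (\<forall>C \<in> set Cs. sem_clause S Xs Ys v C))"

definition rels :: "'a set \<Rightarrow> nat \<Rightarrow> 'a list set set" where
  "rels U n = Pow {t. length t = n \<and> set t \<subseteq> U}"

text \<open>Second-order prefix forall X_1 exists Y_1 ... forall X_k exists Y_k, with
  valuations of the already quantified X's and Y's accumulated in lists.\<close>
fun sem_prefix ::
  "('a, 'r) struct \<Rightarrow> (nat \<times> nat) list \<Rightarrow> 'r clause list \<Rightarrow> 'a list set list \<Rightarrow> 'a list set list \<Rightarrow> bool" where
  "sem_prefix S [] Cs Xs Ys = sem_matrix S Cs Xs Ys"
| "sem_prefix S ((a, b) # ps) Cs Xs Ys =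
     (\<forall>X \<in> rels (fst S) a. \<exists>Y \<in> rels (fst S) b. sem_prefix S ps Cs (Xs @ [X]) (Ys @ [Y]))"

definition models :: "('a, 'r) struct \<Rightarrow> 'r so_ekrom \<Rightarrow> bool" (infix "\<Turnstile>" 50) where
  "S \<Turnstile> \<Phi> \<longleftrightarrow> sem_prefix S (fst \<Phi>) (snd \<Phi>) [] []"

end

theory Submission
  imports Defs
begin

lemma matrix_sub:
  assumes sub: "substructure ar B A"
    and inv: "\<forall>i t. set t \<subseteq> fst B \<longrightarrow> (t \<in> YsB ! i \<longleftrightarrow> t \<in> YsA ! i)"
    and m: "sem_matrix A Cs Xs YsA"
  shows "sem_matrix B Cs Xs YsB"
  unfolding sem_matrix_def
proof (intro allI impI ballI)
  fix v :: "nat \<Rightarrow> _" and C assume v: "\<forall>x. v x \<in> fst B" and C: "C \<in> set Cs"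
  have sB: "fst B \<subseteq> fst A" and rel: "\<forall>R. snd B R = {t \<in> snd A R. set t \<subseteq> fst B}"
    using sub unfolding substructure_def by auto
  have vA: "\<forall>x. v x \<in> fst A" using v sB by blast
  have c: "sem_clause A Xs YsA v C" using m vA C unfolding sem_matrix_def by blast
  have mv: "\<And>ys. set (map v ys) \<subseteq> fst B" using v by auto
  have a: "sem_alit B Xs v a = sem_alit A Xs v a" for a
    by (cases a) (use rel mv in auto)
  have h: "sem_hlit YsB v h = sem_hlit YsA v h" for h
    by (cases h) (use inv mv in auto)
  show "sem_clause B Xs YsB v C" using c a h unfolding sem_clause_def by auto
qed

lemma prefix_sub:
  assumes sub: "substructure ar B A"
  shows "\<And>Xs YsA YsB. length YsA = length YsB \<Longrightarrow>
    \<forall>i t. set t \<subseteq> fst B \<longrightarrow> (t \<in> YsB ! i \<longleftrightarrow> t \<in> YsA ! i) \<Longrightarrow>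
    sem_prefix A ps Cs Xs YsA \<Longrightarrow> sem_prefix B ps Cs Xs YsB"
proof (induction ps)
  case Nil
  then show ?case using matrix_sub[OF sub] by simp
next
  case (Cons p ps)
  obtain a b where p: "p = (a, b)" by (cases p)
  have sB: "fst B \<subseteq> fst A"
    using sub unfolding substructure_def by auto
  show ?case unfolding p sem_prefix.simps
  proof
    fix X assume X: "X \<in> rels (fst B) a"
    have XA: "X \<in> rels (fst A) a" using X sB unfolding rels_def by blast
    obtain Y where Y: "Y \<in> rels (fst A) b" and
      r: "sem_prefix A ps Cs (Xs @ [X]) (YsA @ [Y])"
      using Cons.prems(3) XA unfolding p by auto
    define Y' where "Y' = {t \<in> Y. set t \<subseteq> fst B}"
    have Y': "Y' \<in> rels (fst B) b" using Y unfolding rels_def Y'_def by auto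
    have inv': "\<forall>i t. set t \<subseteq> fst B \<longrightarrow> (t \<in> (YsB @ [Y']) ! i \<longleftrightarrow> t \<in> (YsA @ [Y]) ! i)"
      using Cons.prems(1,2) by (auto simp: nth_append nth_Cons Y'_def split: nat.splits)
    have "sem_prefix B ps Cs (Xs @ [X]) (YsB @ [Y'])"
      using Cons.IH[OF _ inv' r] Cons.prems(1) by simp
    then show "\<exists>Y\<in>rels (fst B) b. sem_prefix B ps Cs (Xs @ [X]) (YsB @ [Y])"
      using Y' by blast
  qed
qed

theorem proposition4p2:
  fixes ar :: "'r \<Rightarrow> nat"
    and \<Phi> :: "'r so_ekrom"
    and A B :: "('a, 'r) struct"
  assumes "so_ekrom_sentence ar \<Phi>"
    and "finite_structure ar A"
    and "finite_structure ar B"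
    and "substructure ar B A"
    and "A \<Turnstile> \<Phi>"
  shows "B \<Turnstile> \<Phi>"
  using prefix_sub[OF assms(4), of "[]" "[]"] assms(5) unfolding models_def by simp

end
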